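(* Let $G=(V,E)$ be an unweighted undirected graph, let $s\in V$ be a source, and suppose we are given, for every $v\in V$, the distance $d_s(v)$ from $s$, the number $\sigma_s(v)$ of shortest $s$-$v$ paths, and the list $P_s(v)$ of predecessors of $v$ (neighbors immediately preceding $v$ on shortest $s$-$v$ paths) in $G$. Let $\beta$ be a batch of edge insertions and let $d_{max}$ be the maximum distance from $s$ (the distance of the node furthest from $s$). Consider the algorithm \textsf{UpdateSSSP}, which assumes all nodes are initially colored white: (i) Create an array $Q[\,]$ of $d_{max}$ empty FIFO queues. For each $e=\{u,v\}\in\beta$: insert $e$ into $E$; if $d_s(u)<d_s(v)$, enqueue $v$ into $Q[d_s(u)+1]$; if $d_s(v)<d_s(u)$, enqueue $u$ into $Q[d_s(v)+1]$. (ii) For $k=1,2,\dots$ while $k<d_{max}$: while $Q[k]$ is nonempty, dequeue $w$ from $Q[k]$; if $w$ is black, skip it; otherwise color $w$ black, set $d_s(w)\leftarrow k$, $P_s(w)\leftarrow\emptyset$, $\sigma_s(w)\leftarrow 0$, and for each incident edge $\{z,w\}$: if $d_s(w)=d_s(z)+1$, add $z$ to $P_s(w)$ and set $\sigma_s(w)\leftarrow\sigma_s(w)+\sigma_s(z)$; if $z$ is white and $d_s(z)\ge d_s(w)+1$, color $z$ gray and enqueue $z$ into $Q[k+1]$. (iii) Reset to white all nodes that have been in some queue. Then the time required by \textsf{UpdateSSSP} to update the distances, the numbers of shortest paths and the lists of predecessors is $O(|\beta|+\|A\|+d_{max})$.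
   Context: $A$ denotes the set of affected nodes, i.e. nodes whose distance from $s$ or whose number of shortest paths from $s$ changes as a consequence of inserting the batch $\beta$; $\|A\|$ denotes $|A|$ plus the number of edges having at least one endpoint in $A$; $|\beta|$ is the number of edges in the batch. *)

theory Defs
  imports Main "HOL-Library.Extended_Nat"
begin

text \<open>An unweighted undirected graph on vertex set V (of type nat) is given by a set E
of 2-element subsets of V.\<close>

definition is_walk :: "nat set set \<Rightarrow> nat list \<Rightarrow> bool" where
  "is_walk E p \<longleftrightarrow> p \<noteq> [] \<and> (\<forall>i. Suc i < length p \<longrightarrow> {p ! i, p ! Suc i} \<in> E)"

definition walks :: "nat set set \<Rightarrow> nat \<Rightarrow> nat \<Rightarrow> nat list set" where
  "walks E s v = {p. is_walk E p \<and> hd p = s \<and> last p = v}"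

text \<open>distance d_s(v) (infinity if v is unreachable)\<close>
definition gdist :: "nat set set \<Rightarrow> nat \<Rightarrow> nat \<Rightarrow> enat" where
  "gdist E s v = (INF p \<in> walks E s v. enat (length p - 1))"

definition nsp :: "nat set set \<Rightarrow> nat \<Rightarrow> nat \<Rightarrow> nat" where
  "nsp E s v = card {p \<in> walks E s v. enat (length p - 1) = gdist E s v}"

definition preds :: "nat set set \<Rightarrow> nat \<Rightarrow> nat \<Rightarrow> nat set" where
  "preds E s v = {u. {u, v} \<in> E \<and> gdist E s v \<noteq> \<infinity> \<and> gdist E s u + 1 = gdist E s v}"

definition max_dist :: "nat set \<Rightarrow> nat set set \<Rightarrow> nat \<Rightarrow> nat" where
  "max_dist V E s = Max {the_enat (gdist E s v) | v. v \<in> V \<and> gdist E s v \<noteq> \<infinity>}"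

definition batch_edges :: "(nat \<times> nat) list \<Rightarrow> nat set set" where
  "batch_edges \<beta> = {{u, v} | u v. (u, v) \<in> set \<beta>}"

definition affected :: "nat set \<Rightarrow> nat set set \<Rightarrow> nat \<Rightarrow> (nat \<times> nat) list \<Rightarrow> nat set" where
  "affected V E s \<beta> = {v \<in> V. gdist E s v \<noteq> gdist (E \<union> batch_edges \<beta>) s v
                          \<or> nsp E s v \<noteq> nsp (E \<union> batch_edges \<beta>) s v}"

definition anorm :: "nat set \<Rightarrow> nat set set \<Rightarrow> nat \<Rightarrow> (nat \<times> nat) list \<Rightarrow> nat" where
  "anorm V E s \<beta> = card (affected V E s \<beta>)
     + card {e \<in> E \<union> batch_edges \<beta>. e \<inter> affected V E s \<beta> \<noteq> {}}"

datatype color = White | Gray | Black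

record st =
  col :: "nat \<Rightarrow> color"
  dd :: "nat \<Rightarrow> enat"
  sg :: "nat \<Rightarrow> nat"
  pr :: "nat \<Rightarrow> nat set"
  qs :: "nat \<Rightarrow> nat list"
  touched :: "nat set"
  cost :: nat

text \<open>enqueue z into Q[i] (constant time, charged by the caller)\<close>
definition enq :: "nat \<Rightarrow> nat \<Rightarrow> st \<Rightarrow> st" where
  "enq i z S = S\<lparr>qs := (qs S)(i := qs S i @ [z]), touched := insert z (touched S)\<rparr>"

text \<open>step (i) for one batch edge {u,v}: insert it (unit cost) and enqueue\<close>
definition phase1_step :: "nat \<times> nat \<Rightarrow> st \<Rightarrow> st" where
  "phase1_step e S = (case e of (u, v) \<Rightarrow>
     let S1 = S\<lparr>cost := cost S + 1\<rparr>;
         S2 = (if dd S u < dd S v then enq (the_enat (dd S u) + 1) v S1 else S1)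
     in if dd S v < dd S u then enq (the_enat (dd S v) + 1) u S2 else S2)"

definition neighbors :: "nat set set \<Rightarrow> nat \<Rightarrow> nat list" where
  "neighbors E w = sorted_list_of_set {z. {z, w} \<in> E}"

definition scan :: "nat \<Rightarrow> nat \<Rightarrow> nat \<Rightarrow> st \<Rightarrow> st" where
  "scan k w z S =
     (let S0 = S\<lparr>cost := cost S + 1\<rparr>;
          S1 = (if dd S0 w = dd S0 z + 1
                then S0\<lparr>pr := (pr S0)(w := insert z (pr S0 w)), sg := (sg S0)(w := sg S0 w + sg S0 z)\<rparr>
                else S0)
      in if col S1 z = White \<and> dd S1 z \<ge> dd S1 w + 1
         then enq (Suc k) z (S1\<lparr>col := (col S1)(z := Gray)\<rparr>)
         else S1)"

definition process :: "nat set set \<Rightarrow> nat \<Rightarrow> nat \<Rightarrow> st \<Rightarrow> st" where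
  "process E k w S =
     (if col S w = Black then S\<lparr>cost := cost S + 1\<rparr>
      else fold (scan k w) (neighbors E w)
             (S\<lparr>cost := cost S + 1, col := (col S)(w := Black), dd := (dd S)(w := enat k),
                pr := (pr S)(w := {}), sg := (sg S)(w := 0)\<rparr>))"

text \<open>one iteration of the outer loop of step (ii): empty Q[k]. Nodes are only
  enqueued into Q[k+1] meanwhile, so this is the while-loop over the contents of Q[k].\<close>
definition level :: "nat set set \<Rightarrow> nat \<Rightarrow> st \<Rightarrow> st" where
  "level E k S = (let S' = fold (process E k) (qs S k) (S\<lparr>cost := cost S + 1\<rparr>)
                  in S'\<lparr>qs := (qs S')(k := [])\<rparr>)"

text \<open>UpdateSSSP: E is the edge set after insertion of the batch; creating Q costs dmax;
  step (iii) costs one unit per node that has been in some queue.\<close>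
definition update_sssp :: "nat set set \<Rightarrow> (nat \<times> nat) list \<Rightarrow> (nat \<Rightarrow> enat) \<Rightarrow> (nat \<Rightarrow> nat)
    \<Rightarrow> (nat \<Rightarrow> nat set) \<Rightarrow> nat \<Rightarrow> st" where
  "update_sssp E \<beta> d \<sigma> P dmax =
     (let S0 = \<lparr>col = (\<lambda>_. White), dd = d, sg = \<sigma>, pr = P, qs = (\<lambda>_. []), touched = {}, cost = dmax\<rparr>;
          S1 = fold phase1_step \<beta> S0;
          S2 = fold (level E) [1..<dmax] S1
      in S2\<lparr>col := (\<lambda>x. if x \<in> touched S2 then White else col S2 x),
            cost := cost S2 + card (touched S2)\<rparr>)"

end

theory Submission
  imports Defs
begin



lemma walk_snoc: "is_walk F p \<Longrightarrow> {last p, z} \<in> F \<Longrightarrow> is_walk F (p@[z])"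
  unfolding is_walk_def
proof (intro conjI allI impI)
  fix i assume h: "p \<noteq> [] \<and> (\<forall>i. Suc i < length p \<longrightarrow> {p ! i, p ! Suc i} \<in> F)" "{last p, z} \<in> F"
    and i: "Suc i < length (p @ [z])"
  show "{(p @ [z]) ! i, (p @ [z]) ! Suc i} \<in> F"
  proof (cases "Suc i < length p")
    case True thus ?thesis using h by (simp add: nth_append)
  next
    case False
    hence "i = length p - 1" "Suc i = length p" using i by auto
    thus ?thesis using h by (simp add: nth_append last_conv_nth)
  qed
qed simp

lemma walk_prefix: "is_walk F (p@[z]) \<Longrightarrow> p \<noteq> [] \<Longrightarrow> is_walk F p"
  unfolding is_walk_def
proof (intro conjI allI impI)
  fix i assume h: "p @ [z] \<noteq> [] \<and> (\<forall>i. Suc i < length (p@[z]) \<longrightarrow> {(p@[z]) ! i, (p@[z]) ! Suc i} \<in> F)"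
    and i: "Suc i < length p"
  thus "{p ! i, p ! Suc i} \<in> F" using h[THEN conjunct2, rule_format, of i] by (simp add: nth_append)
qed simp

lemma walk_mono: "is_walk F p \<Longrightarrow> F \<subseteq> F' \<Longrightarrow> is_walk F' p"
  unfolding is_walk_def by blast

lemma gdist_le: "p \<in> walks F s v \<Longrightarrow> gdist F s v \<le> enat (length p - 1)"
  unfolding gdist_def by (rule INF_lower)

lemma gdist_attained: "gdist F s v \<noteq> \<infinity> \<Longrightarrow> \<exists>p\<in>walks F s v. enat (length p - 1) = gdist F s v"
proof -
  assume a: "gdist F s v \<noteq> \<infinity>"
  hence "walks F s v \<noteq> {}" unfolding gdist_def by (auto simp: top_enat_def)
  then obtain q where "q \<in> walks F s v" by auto
  hence "gdist F s v \<in> (\<lambda>p. enat (length p - 1)) ` walks F s v"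
    unfolding gdist_def by (intro wellorder_InfI) auto
  thus ?thesis by auto
qed




locale LS =
  fixes V :: "nat set" and E :: "nat set set" and s :: nat and \<beta> :: "(nat \<times> nat) list"
    and d :: "nat \<Rightarrow> enat" and dmax :: nat
  assumes finV: "finite V" and Esub: "E \<subseteq> {{u, v} | u v. u \<in> V \<and> v \<in> V \<and> u \<noteq> v}"
    and sV: "s \<in> V"
    and bet: "\<forall>(u, v) \<in> set \<beta>. u \<in> V \<and> v \<in> V \<and> u \<noteq> v \<and> {u, v} \<notin> E"
    and dV: "\<forall>v \<in> V. d v = gdist E s v"
begin

definition "E2 = E \<union> batch_edges \<beta>"
definition "AA = affected V E s \<beta>"

lemma E2sub: "E2 \<subseteq> {{u, v} | u v. u \<in> V \<and> v \<in> V \<and> u \<noteq> v}"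
proof -
  have "batch_edges \<beta> \<subseteq> {{u, v} | u v. u \<in> V \<and> v \<in> V \<and> u \<noteq> v}"
  proof
    fix e assume "e \<in> batch_edges \<beta>"
    then obtain u v where uv: "e = {u, v}" "(u, v) \<in> set \<beta>" unfolding batch_edges_def by blast
    hence "u \<in> V \<and> v \<in> V \<and> u \<noteq> v" using bet by blast
    thus "e \<in> {{u, v} | u v. u \<in> V \<and> v \<in> V \<and> u \<noteq> v}" using uv by blast
  qed
  thus ?thesis using Esub unfolding E2_def by blast
qed

lemma finE2: "finite E2"
proof -
  have "{{u, v} | u v. u \<in> V \<and> v \<in> V \<and> u \<noteq> v} \<subseteq> (\<lambda>(u,v). {u,v}) ` (V \<times> V)" by auto
  thus ?thesis using E2sub finV by (meson finite_SigmaI finite_imageI finite_subset)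
qed

lemma edgeV: "{a, b} \<in> E2 \<Longrightarrow> a \<in> V \<and> b \<in> V \<and> a \<noteq> b"
  using E2sub by (auto simp: doubleton_eq_iff)

lemma walkV: assumes "is_walk E2 p" "hd p = s" shows "set p \<subseteq> V"
proof
  fix x assume "x \<in> set p"
  then obtain i where i: "i < length p" "p ! i = x" by (auto simp: in_set_conv_nth)
  show "x \<in> V"
  proof (cases i)
    case 0 thus ?thesis using i assms sV by (auto simp: hd_conv_nth is_walk_def)
  next
    case (Suc j)
    hence "{p ! j, p ! i} \<in> E2" using assms(1) i unfolding is_walk_def by auto
    thus ?thesis using edgeV i by blast
  qed
qed

lemma finA: "finite AA"
  unfolding AA_def affected_def using finV by auto

definition good :: "nat \<Rightarrow> nat \<Rightarrow> bool" where
  "good j x \<longleftrightarrow> x \<in> V \<and> enat j \<le> d x \<and> (\<exists>p. p \<in> walks E2 s x \<and> length p - 1 = j \<and> \<not> is_walk E p)"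

lemma good_aff: assumes "good j x" shows "x \<in> AA"
proof -
  obtain p where p: "p \<in> walks E2 s x" "length p - 1 = j" "\<not> is_walk E p" and xV: "x \<in> V"
    and jd: "enat j \<le> d x"
    using assms unfolding good_def by blast
  have dx: "d x = gdist E s x" using dV xV by auto
  have le: "gdist E2 s x \<le> enat j" using gdist_le[OF p(1)] p(2) by simp
  show ?thesis
  proof (cases "gdist E s x = gdist E2 s x")
    case False thus ?thesis unfolding AA_def affected_def E2_def using xV by auto
  next
    case True
    hence eq: "gdist E2 s x = enat j" "gdist E s x = enat j" using le jd dx by auto
    let ?O = "{p \<in> walks E s x. enat (length p - 1) = gdist E s x}"
    let ?N = "{p \<in> walks E2 s x. enat (length p - 1) = gdist E2 s x}"
    have sub: "?O \<subseteq> ?N" using eq unfolding walks_def E2_def by (auto intro: walk_mono)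
    have pN: "p \<in> ?N" "p \<notin> ?O" using p eq unfolding walks_def by auto
    have "?N \<subseteq> {xs. set xs \<subseteq> V \<and> length xs = Suc j}"
    proof
      fix q assume "q \<in> ?N"
      hence "is_walk E2 q" "hd q = s" "length q - 1 = j" "q \<noteq> []"
        using eq unfolding walks_def is_walk_def by auto
      thus "q \<in> {xs. set xs \<subseteq> V \<and> length xs = Suc j}" using walkV by auto
    qed
    hence "finite ?N" using finite_lists_length_eq[OF finV] by (rule finite_subset)
    hence "card ?O < card ?N" using sub pN by (intro psubset_card_mono) auto
    thus ?thesis unfolding AA_def affected_def nsp_def E2_def using xV by auto
  qed
qed

definition INV :: "st \<Rightarrow> bool" where
  "INV S \<longleftrightarrow> (\<forall>j x. x \<in> set (qs S j) \<longrightarrow> good j x) \<and> touched S \<subseteq> AA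
     \<and> (\<forall>x. col S x = Black \<longrightarrow> x \<in> AA) \<and> (\<forall>x. col S x \<noteq> Black \<longrightarrow> dd S x = d x)"

definition P :: "nat \<Rightarrow> st \<Rightarrow> nat" where "P m S = (\<Sum>j\<in>{m..<dmax}. length (qs S j))"
definition G :: "st \<Rightarrow> nat" where
  "G S = 2 * (\<Sum>x\<in>{x. col S x = Black}. length (neighbors E2 x))"

lemma enq_sum: "finite I \<Longrightarrow> (\<Sum>j\<in>I. length (qs (enq i z S) j)) \<le> (\<Sum>j\<in>I. length (qs S j)) + 1"
proof (cases "i \<in> I")
  case True
  assume f: "finite I"
  have "(\<Sum>j\<in>I. length (qs (enq i z S) j)) = length (qs (enq i z S) i) + (\<Sum>j\<in>I - {i}. length (qs (enq i z S) j))"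
    using f True by (simp add: sum.remove)
  also have "(\<Sum>j\<in>I - {i}. length (qs (enq i z S) j)) = (\<Sum>j\<in>I - {i}. length (qs S j))"
    by (rule sum.cong) (auto simp: enq_def)
  also have "(\<Sum>j\<in>I. length (qs S j)) = length (qs S i) + (\<Sum>j\<in>I - {i}. length (qs S j))"
    using f True by (simp add: sum.remove)
  ultimately show ?thesis by (simp add: enq_def)
next
  case False
  have "(\<Sum>j\<in>I. length (qs (enq i z S) j)) = (\<Sum>j\<in>I. length (qs S j))"
    by (rule sum.cong) (use False in \<open>auto simp: enq_def\<close>)
  thus ?thesis by simp
qed

lemma INV_enq: "INV S \<Longrightarrow> good i z \<Longrightarrow> INV (enq i z S)"
  unfolding INV_def enq_def using good_aff by auto

lemma INV_gray: "INV S \<Longrightarrow> col S z \<noteq> Black \<Longrightarrow> INV (S\<lparr>col := (col S)(z := Gray)\<rparr>)"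
  unfolding INV_def by auto

end



context LS begin

lemma nbfin: "finite {z. {z, w} \<in> E2}"
proof -
  have "{z. {z, w} \<in> E2} \<subseteq> V"
  proof
    fix z assume "z \<in> {z. {z, w} \<in> E2}"
    hence "{z, w} \<in> E2" by simp
    from edgeV[OF this] show "z \<in> V" by simp
  qed
  thus ?thesis using finV by (rule finite_subset)
qed

lemma nbset: "set (neighbors E2 w) = {z. {z, w} \<in> E2}"
  unfolding neighbors_def by (rule set_sorted_list_of_set[OF nbfin])

lemma nblen: "length (neighbors E2 w) = card {z. {z, w} \<in> E2}"
  unfolding neighbors_def by (rule length_sorted_list_of_set)

lemma good_ext:
  assumes "good k w" "{z, w} \<in> E2" "enat (Suc k) \<le> d z"
  shows "good (Suc k) z"
proof -
  obtain p where p: "p \<in> walks E2 s w" "length p - 1 = k" "\<not> is_walk E p"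
    using assms(1) unfolding good_def by blast
  have ne: "p \<noteq> []" using p(1) unfolding walks_def is_walk_def by auto
  have w1: "is_walk E2 (p @ [z])" using p(1) assms(2) walk_snoc[of E2 p z]
    unfolding walks_def by (auto simp: insert_commute)
  have "\<not> is_walk E (p @ [z])" using walk_prefix ne p(3) by blast
  moreover have "p @ [z] \<in> walks E2 s z" using w1 p(1) ne unfolding walks_def by auto
  moreover have "length (p @ [z]) - 1 = Suc k" using p(2) ne by (cases p) auto
  moreover have "z \<in> V" using edgeV[OF assms(2)] by simp
  ultimately show ?thesis using assms(3) unfolding good_def by blast
qed

lemma scan_lem:
  assumes inv: "INV S" and ddw: "dd S w = enat k" and cw: "col S w = Black" and gw: "good k w"
    and e: "{z, w} \<in> E2"
  shows "INV (scan k w z S) \<and> cost (scan k w z S) = Suc (cost S)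
     \<and> P (Suc k) (scan k w z S) \<le> P (Suc k) S + 1
     \<and> col (scan k w z S) w = Black \<and> dd (scan k w z S) = dd S
     \<and> {x. col (scan k w z S) x = Black} = {x. col S x = Black}"
proof -
  have "\<exists>T. scan k w z S = (if col T z = White \<and> dd T z \<ge> dd T w + 1
        then enq (Suc k) z (T\<lparr>col := (col T)(z := Gray)\<rparr>) else T)
      \<and> qs T = qs S \<and> touched T = touched S \<and> col T = col S \<and> dd T = dd S \<and> cost T = Suc (cost S)"
    unfolding scan_def Let_def by (rule exI, rule conjI, rule refl) simp
  then obtain T where T: "scan k w z S = (if col T z = White \<and> dd T z \<ge> dd T w + 1
        then enq (Suc k) z (T\<lparr>col := (col T)(z := Gray)\<rparr>) else T)"
    "qs T = qs S" "touched T = touched S" "col T = col S" "dd T = dd S" "cost T = Suc (cost S)"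
    by blast
  have invT: "INV T" using inv T unfolding INV_def by simp
  have PT: "P (Suc k) T = P (Suc k) S" unfolding P_def using T by simp
  show ?thesis
  proof (cases "col T z = White \<and> dd T z \<ge> dd T w + 1")
    case True
    have zw: "z \<noteq> w" using True T cw by auto
    have dz: "dd S z = d z" using inv True T unfolding INV_def by auto
    have "enat (Suc k) \<le> d z" using True T ddw dz by (simp add: eSuc_enat[symmetric] eSuc_plus_1)
    hence gz: "good (Suc k) z" using good_ext gw e by blast
    let ?T1 = "T\<lparr>col := (col T)(z := Gray)\<rparr>"
    have "INV ?T1" using INV_gray invT True by auto
    hence "INV (enq (Suc k) z ?T1)" using INV_enq gz by blast
    moreover have "P (Suc k) (enq (Suc k) z ?T1) \<le> P (Suc k) ?T1 + 1"
      unfolding P_def by (rule enq_sum) simp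
    moreover have "P (Suc k) ?T1 = P (Suc k) T" unfolding P_def by simp
    moreover have "{x. col (enq (Suc k) z ?T1) x = Black} = {x. col S x = Black}"
      using True T by (auto simp: enq_def)
    ultimately show ?thesis using True T PT zw cw by (simp add: enq_def)
  next
    case False
    have eq: "scan k w z S = T" by (simp only: T(1) if_not_P[OF False])
    show ?thesis unfolding eq using T invT PT cw by simp
  qed
qed

lemma fold_scan:
  "INV T \<Longrightarrow> dd T w = enat k \<Longrightarrow> col T w = Black \<Longrightarrow> good k w \<Longrightarrow> \<forall>z\<in>set zs. {z, w} \<in> E2 \<Longrightarrow>
   INV (fold (scan k w) zs T) \<and> cost (fold (scan k w) zs T) = cost T + length zs
   \<and> P (Suc k) (fold (scan k w) zs T) \<le> P (Suc k) T + length zs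
   \<and> {x. col (fold (scan k w) zs T) x = Black} = {x. col T x = Black}"
proof (induction zs arbitrary: T)
  case Nil thus ?case by simp
next
  case (Cons z zs)
  have h: "INV (scan k w z T) \<and> cost (scan k w z T) = Suc (cost T)
     \<and> P (Suc k) (scan k w z T) \<le> P (Suc k) T + 1
     \<and> col (scan k w z T) w = Black \<and> dd (scan k w z T) = dd T
     \<and> {x. col (scan k w z T) x = Black} = {x. col T x = Black}"
    using scan_lem Cons.prems by simp
  have "INV (fold (scan k w) zs (scan k w z T)) \<and> cost (fold (scan k w) zs (scan k w z T)) = cost (scan k w z T) + length zs
   \<and> P (Suc k) (fold (scan k w) zs (scan k w z T)) \<le> P (Suc k) (scan k w z T) + length zs
   \<and> {x. col (fold (scan k w) zs (scan k w z T)) x = Black} = {x. col (scan k w z T) x = Black}"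
    using Cons.IH[of "scan k w z T"] h Cons.prems by simp
  thus ?case using h by simp
qed

lemma blackfin: "INV S \<Longrightarrow> finite {x. col S x = Black}"
proof -
  assume "INV S"
  hence "{x. col S x = Black} \<subseteq> AA" unfolding INV_def by blast
  thus ?thesis using finA by (rule finite_subset)
qed

lemma process_lem:
  assumes inv: "INV S" and gw: "good k w"
  shows "INV (process E2 k w S) \<and> cost (process E2 k w S) + P (Suc k) (process E2 k w S) + G S
     \<le> cost S + P (Suc k) S + 1 + G (process E2 k w S)"
proof (cases "col S w = Black")
  case True
  thus ?thesis using inv unfolding process_def INV_def P_def G_def by simp
next
  case False
  let ?S0 = "S\<lparr>cost := cost S + 1, col := (col S)(w := Black), dd := (dd S)(w := enat k),
                pr := (pr S)(w := {}), sg := (sg S)(w := 0)\<rparr>"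
  have pe: "process E2 k w S = fold (scan k w) (neighbors E2 w) ?S0"
    using False unfolding process_def by simp
  have wA: "w \<in> AA" using good_aff gw by blast
  have inv0: "INV ?S0" using inv wA unfolding INV_def by auto
  have "\<forall>z\<in>set (neighbors E2 w). {z, w} \<in> E2" using nbset by blast
  hence F: "INV (fold (scan k w) (neighbors E2 w) ?S0)
     \<and> cost (fold (scan k w) (neighbors E2 w) ?S0) = cost ?S0 + length (neighbors E2 w)
     \<and> P (Suc k) (fold (scan k w) (neighbors E2 w) ?S0) \<le> P (Suc k) ?S0 + length (neighbors E2 w)
     \<and> {x. col (fold (scan k w) (neighbors E2 w) ?S0) x = Black} = {x. col ?S0 x = Black}"
    using fold_scan[OF inv0 _ _ gw] by simp
  have B0: "{x. col ?S0 x = Black} = insert w {x. col S x = Black}" by auto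
  have "G (process E2 k w S) = 2 * length (neighbors E2 w) + G S"
    unfolding G_def pe using F B0 blackfin[OF inv] False by simp
  moreover have "P (Suc k) ?S0 = P (Suc k) S" unfolding P_def by simp
  ultimately show ?thesis using F pe by simp
qed

lemma fold_process:
  "INV S \<Longrightarrow> \<forall>w\<in>set ws. good k w \<Longrightarrow>
   INV (fold (process E2 k) ws S) \<and> cost (fold (process E2 k) ws S) + P (Suc k) (fold (process E2 k) ws S) + G S
     \<le> cost S + P (Suc k) S + length ws + G (fold (process E2 k) ws S)"
proof (induction ws arbitrary: S)
  case Nil thus ?case by simp
next
  case (Cons w ws)
  have h: "INV (process E2 k w S) \<and> cost (process E2 k w S) + P (Suc k) (process E2 k w S) + G S
     \<le> cost S + P (Suc k) S + 1 + G (process E2 k w S)" using process_lem Cons.prems by simp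
  have "INV (fold (process E2 k) ws (process E2 k w S)) \<and> cost (fold (process E2 k) ws (process E2 k w S)) + P (Suc k) (fold (process E2 k) ws (process E2 k w S)) + G (process E2 k w S)
     \<le> cost (process E2 k w S) + P (Suc k) (process E2 k w S) + length ws + G (fold (process E2 k) ws (process E2 k w S))"
    using Cons.IH[of "process E2 k w S"] h Cons.prems by simp
  thus ?case using h by simp
qed

end



context LS begin

lemma level_lem:
  assumes inv: "INV S" and k: "k < dmax"
  shows "INV (level E2 k S) \<and> cost (level E2 k S) + P (Suc k) (level E2 k S) + G S
     \<le> cost S + 1 + P k S + G (level E2 k S)"
proof -
  let ?S1 = "S\<lparr>cost := cost S + 1\<rparr>"
  let ?S' = "fold (process E2 k) (qs S k) ?S1"
  have inv1: "INV ?S1" using inv unfolding INV_def by simp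
  have gw: "\<forall>w\<in>set (qs ?S1 k). good k w" using inv unfolding INV_def by simp
  have F: "INV ?S' \<and> cost ?S' + P (Suc k) ?S' + G ?S1 \<le> cost ?S1 + P (Suc k) ?S1 + length (qs S k) + G ?S'"
    using fold_process[OF inv1 gw] by simp
  have lv: "level E2 k S = ?S'\<lparr>qs := (qs ?S')(k := [])\<rparr>" unfolding level_def Let_def by simp
  have i2: "INV (level E2 k S)" using F unfolding lv INV_def by auto
  have P2: "P (Suc k) (level E2 k S) = P (Suc k) ?S'" unfolding lv P_def by (rule sum.cong) auto
  have G2: "G (level E2 k S) = G ?S'" unfolding lv G_def by simp
  have "{k..<dmax} = insert k {Suc k..<dmax}" using k by auto
  hence Pk: "P k S = length (qs S k) + P (Suc k) S" unfolding P_def by simp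
  have "P (Suc k) ?S1 = P (Suc k) S" "G ?S1 = G S" unfolding P_def G_def by simp_all
  thus ?thesis using F i2 P2 G2 Pk lv by simp
qed

lemma levels_lem:
  "INV S \<Longrightarrow> m + n \<le> dmax \<Longrightarrow> INV (fold (level E2) [m..<m+n] S)
   \<and> cost (fold (level E2) [m..<m+n] S) + P (m+n) (fold (level E2) [m..<m+n] S) + G S
     \<le> cost S + n + P m S + G (fold (level E2) [m..<m+n] S)"
proof (induction n)
  case 0 thus ?case by simp
next
  case (Suc n)
  let ?S1 = "fold (level E2) [m..<m+n] S"
  have IH: "INV ?S1 \<and> cost ?S1 + P (m+n) ?S1 + G S \<le> cost S + n + P m S + G ?S1"
    using Suc by simp
  have L: "INV (level E2 (m+n) ?S1) \<and> cost (level E2 (m+n) ?S1) + P (Suc (m+n)) (level E2 (m+n) ?S1) + G ?S1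
     \<le> cost ?S1 + 1 + P (m+n) ?S1 + G (level E2 (m+n) ?S1)"
    using level_lem IH Suc.prems by simp
  have "fold (level E2) [m..<m+Suc n] S = level E2 (m+n) ?S1" by simp
  thus ?case using IH L by simp
qed

lemma phase_good:
  assumes "{u, v} \<in> batch_edges \<beta>" "u \<in> V" "v \<in> V" "{u, v} \<notin> E" "d u < d v"
  shows "good (the_enat (d u) + 1) v"
proof -
  have du: "d u = gdist E s u" using dV assms(2) by simp
  have "d u \<noteq> \<infinity>" using assms(5) by (cases "d u") auto
  then obtain q where q: "q \<in> walks E s u" "enat (length q - 1) = d u"
    using gdist_attained du by metis
  have ne: "q \<noteq> []" using q(1) unfolding walks_def is_walk_def by auto
  have wq: "is_walk E2 q" using q(1) walk_mono unfolding walks_def E2_def by blast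
  have "{last q, v} \<in> E2" using q(1) assms(1) unfolding walks_def E2_def by auto
  hence w: "is_walk E2 (q @ [v])" using walk_snoc wq by blast
  have "\<not> is_walk E (q @ [v])"
  proof
    assume "is_walk E (q @ [v])"
    moreover have "Suc (length q - 1) < length (q @ [v])" using ne by simp
    ultimately have "{(q @ [v]) ! (length q - 1), (q @ [v]) ! Suc (length q - 1)} \<in> E"
      unfolding is_walk_def by blast
    moreover have "(q @ [v]) ! (length q - 1) = u" using q(1) ne
      unfolding walks_def by (simp add: nth_append last_conv_nth)
    moreover have "(q @ [v]) ! Suc (length q - 1) = v" using ne by (simp add: nth_append)
    ultimately show False using assms(4) by simp
  qed
  moreover have "q @ [v] \<in> walks E2 s v" using w q(1) ne unfolding walks_def by auto
  moreover have "length (q @ [v]) - 1 = the_enat (d u) + 1" using q(2)[symmetric] ne by (cases q) auto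
  moreover have "enat (the_enat (d u) + 1) \<le> d v" using q(2)[symmetric] assms(5)
    by (cases "d v") auto
  ultimately show ?thesis unfolding good_def using assms(3) by blast
qed

lemma phase1_lem:
  "INV S \<Longrightarrow> dd S = d \<Longrightarrow> col S = (\<lambda>_. White) \<Longrightarrow> set bs \<subseteq> set \<beta> \<Longrightarrow> finite I \<Longrightarrow>
   INV (fold phase1_step bs S) \<and> dd (fold phase1_step bs S) = d \<and> col (fold phase1_step bs S) = (\<lambda>_. White)
   \<and> cost (fold phase1_step bs S) = cost S + length bs
   \<and> (\<Sum>j\<in>I. length (qs (fold phase1_step bs S) j)) \<le> (\<Sum>j\<in>I. length (qs S j)) + 2 * length bs"
proof (induction bs arbitrary: S)
  case Nil thus ?case by simp
next
  case (Cons b bs)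
  obtain u v where b: "b = (u, v)" by fastforce
  have uv: "(u, v) \<in> set \<beta>" using Cons.prems b by auto
  hence uvV: "u \<in> V" "v \<in> V" "{u, v} \<notin> E" using bet by auto
  have be: "{u, v} \<in> batch_edges \<beta>" "{v, u} \<in> batch_edges \<beta>"
    using uv unfolding batch_edges_def by (auto simp: insert_commute)
  let ?S1 = "S\<lparr>cost := cost S + 1\<rparr>"
  let ?S2 = "if d u < d v then enq (the_enat (d u) + 1) v ?S1 else ?S1"
  have st: "phase1_step b S = (if d v < d u then enq (the_enat (d v) + 1) u ?S2 else ?S2)"
    unfolding b phase1_step_def Let_def using Cons.prems by simp
  have i1: "INV ?S1" using Cons.prems unfolding INV_def by simp
  have i2: "INV ?S2"
    using i1 INV_enq phase_good[OF be(1) uvV] by auto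
  have i3: "INV (phase1_step b S)"
    unfolding st using i2 INV_enq phase_good[OF be(2) uvV(2,1)] uvV(3) by (auto simp: insert_commute)
  have s1: "(\<Sum>j\<in>I. length (qs ?S1 j)) = (\<Sum>j\<in>I. length (qs S j))" by simp
  have s2: "(\<Sum>j\<in>I. length (qs ?S2 j)) \<le> (\<Sum>j\<in>I. length (qs S j)) + 1"
  proof (cases "d u < d v")
    case True thus ?thesis using enq_sum[OF Cons.prems(5), of _ _ ?S1] s1 by simp
  qed simp
  have s3: "(\<Sum>j\<in>I. length (qs (phase1_step b S) j)) \<le> (\<Sum>j\<in>I. length (qs ?S2 j)) + 1"
    unfolding st using enq_sum[OF Cons.prems(5)] by auto
  have o: "dd (phase1_step b S) = d" "col (phase1_step b S) = (\<lambda>_. White)" "cost (phase1_step b S) = Suc (cost S)"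
    unfolding st using Cons.prems by (auto simp: enq_def)
  have "INV (fold phase1_step bs (phase1_step b S)) \<and> dd (fold phase1_step bs (phase1_step b S)) = d \<and> col (fold phase1_step bs (phase1_step b S)) = (\<lambda>_. White)
   \<and> cost (fold phase1_step bs (phase1_step b S)) = cost (phase1_step b S) + length bs
   \<and> (\<Sum>j\<in>I. length (qs (fold phase1_step bs (phase1_step b S)) j)) \<le> (\<Sum>j\<in>I. length (qs (phase1_step b S) j)) + 2 * length bs"
    using Cons.IH[OF i3 o(1) o(2)] Cons.prems by simp
  thus ?case using s2 s3 o by simp
qed

lemma deg_sum:
  assumes B: "B \<subseteq> AA"
  shows "(\<Sum>x\<in>B. length (neighbors E2 x)) \<le> 2 * card {e \<in> E2. e \<inter> AA \<noteq> {}}"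
proof -
  let ?F = "{e \<in> E2. e \<inter> AA \<noteq> {}}"
  have finB: "finite B" using B finA by (rule finite_subset)
  have finF: "finite ?F" using finE2 by simp
  have "\<forall>x\<in>B. length (neighbors E2 x) \<le> card {e\<in>?F. x \<in> e}"
  proof
    fix x assume xB: "x \<in> B"
    have "card {z. {z, x} \<in> E2} \<le> card {e\<in>?F. x \<in> e}"
    proof (rule card_inj_on_le)
      show "inj_on (\<lambda>z. {z, x}) {z. {z, x} \<in> E2}" by (auto simp: inj_on_def doubleton_eq_iff)
      show "(\<lambda>z. {z, x}) ` {z. {z, x} \<in> E2} \<subseteq> {e\<in>?F. x \<in> e}" using xB B by auto
      show "finite {e\<in>?F. x \<in> e}" by (rule finite_subset[OF _ finE2]) auto
    qed
    thus "length (neighbors E2 x) \<le> card {e\<in>?F. x \<in> e}" using nblen by simp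
  qed
  hence "(\<Sum>x\<in>B. length (neighbors E2 x)) \<le> (\<Sum>x\<in>B. card {e\<in>?F. x \<in> e})" by (simp add: sum_mono)
  also have "\<dots> = (\<Sum>x\<in>B. \<Sum>e\<in>?F. if x \<in> e then 1 else 0)"
    using finF by (simp add: sum.inter_filter[symmetric])
  also have "\<dots> = (\<Sum>e\<in>?F. \<Sum>x\<in>B. if x \<in> e then 1 else 0)" by (rule sum.swap)
  also have "\<dots> = (\<Sum>e\<in>?F. card {x\<in>B. x \<in> e})"
    using finB by (simp add: sum.inter_filter[symmetric])
  also have "\<dots> \<le> (\<Sum>e\<in>?F. 2)"
  proof (rule sum_mono)
    fix e assume "e \<in> ?F"
    hence "e \<in> E2" by simp
    then obtain a b where e: "e = {a, b}" using E2sub by blast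
    have "card {x\<in>B. x \<in> e} \<le> card e" using e by (intro card_mono) auto
    also have "\<dots> \<le> 2" unfolding e by (simp add: card_insert_if)
    finally show "card {x\<in>B. x \<in> e} \<le> 2" .
  qed
  finally show ?thesis by simp
qed

end



theorem theorem3:
  shows "\<exists>c::nat. \<forall>(V::nat set) E s \<beta> d \<sigma> P.
    finite V \<and> E \<subseteq> {{u, v} | u v. u \<in> V \<and> v \<in> V \<and> u \<noteq> v} \<and> s \<in> V \<and>
    (\<forall>(u, v) \<in> set \<beta>. u \<in> V \<and> v \<in> V \<and> u \<noteq> v \<and> {u, v} \<notin> E) \<and>
    distinct (map (\<lambda>(u, v). {u, v}) \<beta>) \<and>
    (\<forall>v \<in> V. d v = gdist E s v \<and> \<sigma> v = nsp E s v \<and> P v = preds E s v)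
    \<longrightarrow> cost (update_sssp (E \<union> batch_edges \<beta>) \<beta> d \<sigma> P (max_dist V E s))
        \<le> c * (length \<beta> + anorm V E s \<beta> + max_dist V E s)"
proof (rule exI[of _ 4], intro allI impI)
  fix V :: "nat set" and E s \<beta> d \<sigma> Pr
  assume H: "finite V \<and> E \<subseteq> {{u, v} | u v. u \<in> V \<and> v \<in> V \<and> u \<noteq> v} \<and> s \<in> V \<and>
    (\<forall>(u, v) \<in> set \<beta>. u \<in> V \<and> v \<in> V \<and> u \<noteq> v \<and> {u, v} \<notin> E) \<and>
    distinct (map (\<lambda>(u, v). {u, v}) \<beta>) \<and>
    (\<forall>v \<in> V. d v = gdist E s v \<and> \<sigma> v = nsp E s v \<and> Pr v = preds E s v)"
  define dmax where "dmax = max_dist V E s"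
  interpret L: LS V E s \<beta> d dmax
    using H by unfold_locales auto
  define S0 where "S0 = \<lparr>col = (\<lambda>_. White), dd = d, sg = \<sigma>, pr = Pr, qs = (\<lambda>_. []), touched = {}, cost = dmax\<rparr>"
  define S1 where "S1 = fold phase1_step \<beta> S0"
  define S2 where "S2 = fold (level L.E2) [1..<dmax] S1"
  have i0: "L.INV S0" unfolding S0_def L.INV_def by simp
  have ph: "L.INV S1 \<and> dd S1 = d \<and> col S1 = (\<lambda>_. White) \<and> cost S1 = cost S0 + length \<beta>
     \<and> (\<Sum>j\<in>{1..<dmax}. length (qs S1 j)) \<le> (\<Sum>j\<in>{1..<dmax}. length (qs S0 j)) + 2 * length \<beta>"
    unfolding S1_def by (rule L.phase1_lem[OF i0]) (simp_all add: S0_def)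
  hence P1: "L.P 1 S1 \<le> 2 * length \<beta>" and c1: "cost S1 = dmax + length \<beta>" and G1: "L.G S1 = 0"
    and i1: "L.INV S1"
    unfolding L.P_def L.G_def by (simp_all add: S0_def)
  have main: "L.INV S2 \<and> cost S2 \<le> cost S1 + dmax + L.P 1 S1 + L.G S2"
  proof (cases "dmax = 0")
    case True thus ?thesis using i1 unfolding S2_def by simp
  next
    case False
    have e: "[1..<dmax] = [1..<1 + (dmax - 1)]" using False by simp
    have "L.INV S2 \<and> cost S2 + L.P (1 + (dmax - 1)) S2 + L.G S1 \<le> cost S1 + (dmax - 1) + L.P 1 S1 + L.G S2"
      unfolding S2_def e by (rule L.levels_lem[OF i1]) (use False in simp)
    hence a: "L.INV S2" and b: "cost S2 + L.P (1 + (dmax - 1)) S2 + L.G S1 \<le> cost S1 + (dmax - 1) + L.P 1 S1 + L.G S2"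
      by simp_all
    have "dmax - 1 \<le> dmax" by simp
    hence "cost S2 \<le> cost S1 + dmax + L.P 1 S1 + L.G S2" using b by linarith
    thus ?thesis using a by simp
  qed
  have "{x. col S2 x = Black} \<subseteq> L.AA" using main unfolding L.INV_def by blast
  hence G2: "L.G S2 \<le> 4 * card {e \<in> L.E2. e \<inter> L.AA \<noteq> {}}"
    unfolding L.G_def using L.deg_sum by fastforce
  have "touched S2 \<subseteq> L.AA" using main unfolding L.INV_def by blast
  hence T2: "card (touched S2) \<le> card L.AA" using L.finA by (rule card_mono[rotated])
  have cu: "cost (update_sssp (E \<union> batch_edges \<beta>) \<beta> d \<sigma> Pr dmax) = cost S2 + card (touched S2)"
    unfolding update_sssp_def Let_def S2_def S1_def S0_def L.E2_def by simp
  have an: "anorm V E s \<beta> = card L.AA + card {e \<in> L.E2. e \<inter> L.AA \<noteq> {}}"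
    unfolding anorm_def L.AA_def L.E2_def by simp
  show "cost (update_sssp (E \<union> batch_edges \<beta>) \<beta> d \<sigma> Pr (max_dist V E s))
        \<le> 4 * (length \<beta> + anorm V E s \<beta> + max_dist V E s)"
    unfolding dmax_def[symmetric] cu an using main[THEN conjunct2] P1 c1 G2 T2 by (simp only: distrib_left)
qed



end
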